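(* Let $p$ be an odd prime, let $a,c$ be positive integers such that $c$ is a primitive divisor of $p^a-1$, and let $b=2^t$ with $t\ge 2$. Then $bc$ is a primitive divisor of $p^{ab}-1$ if and only if $p^a\equiv 1\pmod 4$ and $\tfrac{p^a-1}{c}$ is odd.
   Context: An integer $e$ is a primitive divisor of $p^m-1$ if $e\mid p^m-1$ and $e\nmid p^s-1$ for every $1\le s<m$. *)

theory Defs
  imports "HOL-Computational_Algebra.Primes"
begin

definition primitive_divisor :: "nat \<Rightarrow> nat \<Rightarrow> nat \<Rightarrow> bool" where
  "primitive_divisor e p m \<longleftrightarrow>
     e dvd (p ^ m - 1) \<and> (\<forall>s. 1 \<le> s \<and> s < m \<longrightarrow> \<not> e dvd (p ^ s - 1))"

end

theory Submission
  imports Defs "HOL-Number_Theory.Number_Theory"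
begin

definition SS :: "nat \<Rightarrow> nat \<Rightarrow> nat" where "SS q k = (\<Sum>i<k. q^i)"

lemma SS_double: "SS q (m+m) = SS q m * (1 + q^m)"
proof -
  have u: "{..<m+m} = {..<m} \<union> {m..<m+m}" by auto
  have "SS q (m+m) = (\<Sum>i<m. q^i) + (\<Sum>i\<in>{m..<m+m}. q^i)"
    unfolding SS_def u by (rule sum.union_disjoint) auto
  also have "(\<Sum>i\<in>{m..<m+m}. q^i) = (\<Sum>i\<in>{0..<m}. q^(i+m))"
    using sum.shift_bounds_nat_ivl[of "\<lambda>i. q^i" 0 m m] by simp
  also have "\<dots> = q^m * (\<Sum>i<m. q^i)" by (simp add: power_add sum_distrib_left atLeast0LessThan mult.commute)
  finally show ?thesis by (simp add: SS_def algebra_simps)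
qed

lemma SS_parity: "odd (q::nat) \<Longrightarrow> (even (SS q k) \<longleftrightarrow> even k)"
  by (induction k) (auto simp: SS_def)

lemma SS_eq: "(q::nat) \<ge> 1 \<Longrightarrow> q^k - 1 = (q-1) * SS q k"
proof -
  assume q: "q \<ge> 1"
  have "int (q^k - 1) = int q ^ k - 1" using q by (simp add: of_nat_diff)
  also have "\<dots> = (int q - 1) * (\<Sum>i<k. int q ^ i)" by (rule power_diff_1_eq)
  also have "\<dots> = int ((q-1) * SS q k)" using q by (simp add: SS_def of_nat_diff)
  finally show ?thesis by linarith
qed

lemma SS_2adic: "q mod 4 = (1::nat) \<Longrightarrow> 2^t dvd SS q k \<Longrightarrow> 2^t dvd k"
proof (induction t arbitrary: k)
  case 0 then show ?case by simp
next
  case (Suc t)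
  have oq: "odd q" using Suc.prems(1) by presburger
  have "(2::nat) dvd 2^Suc t" by simp
  then have "even (SS q k)" using Suc.prems(2) by (rule dvd_trans)
  then have "even k" using SS_parity[OF oq] by simp
  then obtain m where "k = 2 * m" by blast
  then have k: "k = m + m" by simp
  have "q^m mod 4 = (q mod 4)^m mod 4" by (rule power_mod[symmetric])
  also have "\<dots> = 1" using Suc.prems(1) by simp
  finally have "q^m mod 4 = 1" .
  then have "(1 + q^m) mod 4 = 2" by presburger
  have e: "1 + q^m = 4 * ((1+q^m) div 4) + 2"
    using div_mult_mod_eq[of "1+q^m" 4] \<open>(1 + q^m) mod 4 = 2\<close> by linarith
  define r where "r = 2 * ((1+q^m) div 4) + 1"
  have r: "1 + q^m = 2 * r" "odd r" unfolding r_def using e by simp_all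
  have "2 * 2^t dvd 2 * (SS q m * r)" using Suc.prems(2) unfolding k SS_double r(1) by (simp add: ac_simps)
  then have "2^t dvd SS q m * r" by simp
  moreover have "coprime (2^t) r" using r(2) by simp
  ultimately have "2^t dvd SS q m" using coprime_dvd_mult_left_iff by blast
  then have "2^t dvd m" using Suc.IH Suc.prems(1) by blast
  then have "2 * 2^t dvd 2 * m" by simp
  then show ?case unfolding k mult_2[symmetric] by simp
qed

lemma sqm1: "(y::nat) \<ge> 1 \<Longrightarrow> y*y - 1 = (y-1)*(y+1)"
  by (cases y) (auto simp: algebra_simps)

lemma two_pow: "odd (q::nat) \<Longrightarrow> 2^n * (q^2 - 1) dvd q^(2^(n+1)) - 1"
proof (induction n)
  case 0 then show ?case by simp
next
  case (Suc n)
  have q1: "q \<ge> 1" using Suc.prems by (cases q) auto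
  let ?x = "q^(2^(n+1))"
  have x1: "?x \<ge> 1" using q1 by simp
  have "(2::nat)^(Suc n+1) = 2^(n+1) + 2^(n+1)" by simp
  then have "q^(2^(Suc n+1)) = ?x * ?x" by (metis power_add)
  then have e: "q^(2^(Suc n+1)) - 1 = (?x - 1) * (?x + 1)" using sqm1[OF x1] by simp
  have B: "2 dvd (?x + 1)" using Suc.prems by simp
  have A: "2^n * (q^2 - 1) dvd ?x - 1" using Suc.IH Suc.prems by simp
  have C: "2^n * (q^2 - 1) * 2 dvd (?x - 1) * (?x + 1)" using mult_dvd_mono[OF A B] .
  have D: "2^n * (q^2 - 1) * 2 = 2^Suc n * (q^2 - 1)" by simp
  show ?case unfolding e D[symmetric] by (rule C)
qed

lemma ord_eq:
  fixes p a c :: nat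
  assumes "a > 0" "primitive_divisor c p a" "p \<ge> 1"
  shows "ord c p = a"
proof -
  have "c dvd p^a - 1" using assms(2) unfolding primitive_divisor_def by blast
  then have "[p^a = 1] (mod c)" using assms(3) by (simp add: cong_altdef_nat)
  then have d: "ord c p dvd a" by (simp add: ord_divides')
  then have pos: "ord c p > 0" using assms(1) by (cases "ord c p") auto
  have le: "ord c p \<le> a" using d assms(1) by (simp add: dvd_imp_le)
  have "[p^(ord c p) = 1] (mod c)" by (simp add: ord_divides')
  then have "c dvd p^(ord c p) - 1" using assms(3) by (simp add: cong_altdef_nat)
  then have "\<not> ord c p < a" using assms(2) pos unfolding primitive_divisor_def by (metis One_nat_def Suc_leI)
  then show ?thesis using le by simp
qed

theorem mainTheorem13:
  fixes p a c b t :: nat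
  assumes "prime p" and "odd p"
    and "a > 0" and "c > 0"
    and "primitive_divisor c p a"
    and "b = 2 ^ t" and "t \<ge> 2"
  shows "primitive_divisor (b * c) p (a * b) \<longleftrightarrow>
           (p ^ a mod 4 = 1 \<and> odd ((p ^ a - 1) div c))"
proof -
  define q where "q = p^a"
  define d where "d = (q - 1) div c"
  have p1: "p \<ge> 1" using assms(1) prime_gt_0_nat by (simp add: Suc_leI)
  have q1: "q \<ge> 1" using p1 unfolding q_def by simp
  have oq: "odd q" using assms(2) unfolding q_def by simp
  have cdv: "c dvd q - 1" using assms(5) unfolding primitive_divisor_def q_def by blast
  have qcd: "q - 1 = c * d" using cdv unfolding d_def by simp
  have q2: "q^2 - 1 = (q - 1) * (q + 1)" using sqm1[OF q1] by (simp add: power2_eq_square)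
  have q2c: "q^2 - 1 = c * (d * (q + 1))" unfolding q2 qcd by (simp only: mult.assoc)
  have ordv: "ord c p = a" using ord_eq[OF assms(3) assms(5) p1] .
  have tm: "t = (t - 2) + 2" using assms(7) by simp
  have pw: "\<And>k. p^(a*k) = q^k" unfolding q_def by (simp add: power_mult)
  show ?thesis
  proof
    assume prim: "primitive_divisor (b * c) p (a * b)"
    show "p ^ a mod 4 = 1 \<and> odd ((p ^ a - 1) div c)"
    proof (rule ccontr)
      assume neg: "\<not> (p ^ a mod 4 = 1 \<and> odd ((p ^ a - 1) div c))"
      have "4 dvd d * (q + 1)"
      proof (cases "q mod 4 = 1")
        case True
        then have "even d" using neg unfolding q_def d_def by simp
        moreover have "even (q+1)" using oq by simp
        ultimately show ?thesis by (metis mult_dvd_mono numeral_Bit0_eq_double mult_2)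
      next
        case False
        then have "q mod 4 = 3" using oq by presburger
        then have "4 dvd q + 1" by presburger
        then show ?thesis by (rule dvd_mult)
      qed
      then have "c * 4 dvd c * (d * (q + 1))" by (rule mult_dvd_mono[OF dvd_refl])
      then have F0: "4 * c dvd q^2 - 1" unfolding q2c by (simp only: mult.commute)
      have F1: "2^(t-2) * (4 * c) dvd 2^(t-2) * (q^2 - 1)" using F0 by (rule mult_dvd_mono[OF dvd_refl])
      have F2: "2^(t-2) * (4*c) = b * c"
      proof -
        have "b = 2^(t-2+2)" using assms(6) tm by simp
        also have "\<dots> = 2^(t-2)*4" by (simp add: power_add)
        finally show ?thesis by simp
      qed
      have F3: "2^(t-2) * (q^2 - 1) dvd q^(2^(t-2+1)) - 1" by (rule two_pow[OF oq])
      have F4: "q^(2^(t-2+1)) = p^(a*2^(t-1))" using pw assms(7)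
        by (simp add: Suc_diff_Suc numeral_2_eq_2)
      have "b * c dvd q^(2^(t-2+1)) - 1" using dvd_trans[OF F1 F3] unfolding F2 .
      then have dv: "b * c dvd p^(a * 2^(t-1)) - 1" unfolding F4 .
      have "1 \<le> a * 2^(t-1)" using assms(3) by simp
      moreover have "a * 2^(t-1) < a * b" using assms(3,6,7)
        by (simp add: power_strict_increasing)
      ultimately show False using prim dv unfolding primitive_divisor_def by blast
    qed
  next
    assume rhs: "p ^ a mod 4 = 1 \<and> odd ((p ^ a - 1) div c)"
    then have q4: "q mod 4 = 1" and od: "odd d" unfolding q_def d_def by auto
    have "2 dvd d * (q + 1)" using oq by simp
    then have "c * 2 dvd c * (d * (q + 1))" by (rule mult_dvd_mono[OF dvd_refl])
    then have G0: "2 * c dvd q^2 - 1" unfolding q2c by (simp only: mult.commute)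
    have G1: "2^(t-1) * (2 * c) dvd 2^(t-1) * (q^2 - 1)" using G0 by (rule mult_dvd_mono[OF dvd_refl])
    have G2: "2^(t-1) * (2*c) = b * c"
    proof -
      have "b = 2^(t-1+1)" using assms(6,7) by simp
      also have "\<dots> = 2^(t-1)*2" by (simp add: power_add)
      finally show ?thesis by simp
    qed
    have G3: "2^(t-1) * (q^2 - 1) dvd q^(2^(t-1+1)) - 1" by (rule two_pow[OF oq])
    have G4: "q^(2^(t-1+1)) = p^(a*b)" using pw[of b] assms(6,7) by simp
    have "b * c dvd q^(2^(t-1+1)) - 1" using dvd_trans[OF G1 G3] unfolding G2 .
    then have dv: "b * c dvd p^(a*b) - 1" unfolding G4 .
    have nd: "\<not> b * c dvd p^s - 1" if s: "1 \<le> s" "s < a * b" for s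
    proof
      assume h: "b * c dvd p^s - 1"
      then have "c dvd p^s - 1" by (simp add: dvd_mult_right)
      then have "[p^s = 1] (mod c)" using p1 by (simp add: cong_altdef_nat)
      then have "a dvd s" using ordv by (simp add: ord_divides')
      then obtain k where k: "s = a * k" by blast
      have k0: "k > 0" using s k by (cases k) auto
      have kb: "k < b" using s k by simp
      have "b * c dvd c * (d * SS q k)" using h unfolding k pw SS_eq[OF q1] qcd by (simp add: ac_simps)
      then have "b dvd d * SS q k" using assms(4) by (simp add: mult.commute)
      moreover have "coprime b d" using od assms(6) by simp
      ultimately have "b dvd SS q k" using coprime_dvd_mult_right_iff by blast
      then have "b dvd k" using SS_2adic[OF q4] assms(6) by blast
      then show False using k0 kb by (simp add: nat_dvd_not_less)
    qed
    show "primitive_divisor (b * c) p (a * b)" unfolding primitive_divisor_def using dv nd by blast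
  qed
qed

end
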